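(* Let $A\in\mathbb{R}^{n\times n}$ be Metzler and Hurwitz stable, $b_0\in\mathbb{R}^n_{\ge0}$, and $\mu,\theta>0$ with $r:=\mu/\theta<g_0:=-e_n^TA^{-1}b_0$. Let $g_n:=-e_n^TA^{-1}e_n$ and $u_*:=(g_0-r)/(g_nr)$. Then for all $\eta,k_p>0$ the unique equilibrium $$(x^*,z_1^*,z_2^* )=\Big(-A^{-1}(b_0-ru_*e_n),\ \frac{\mu}{\eta u_*},\ \frac{u_*}{k_p}\Big)$$ of the system $\dot x=Ax-k_px_nz_2e_n+b_0$, $\dot z_1=\mu-k_p\eta z_1z_2$, $\dot z_2=\theta x_n-k_p\eta z_1z_2$ is locally exponentially stable.
   Context: Metzler: all off-diagonal entries nonnegative. Hurwitz stable: all eigenvalues have negative real part. $e_i$: standard basis vectors of $\mathbb{R}^n$; $x_n=e_n^Tx$. An equilibrium is called locally exponentially stable here if the Jacobian matrix of the vector field at the equilibrium is Hurwitz stable. *)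

theory Defs
  imports "HOL-Analysis.Derivative" "Jordan_Normal_Form.Matrix" "Jordan_Normal_Form.Char_Poly"
begin

(* Indices are 0-based: the standard basis vector e_n of R^n is unit_vec n (n-1),
   and x_n = x $ (n-1). *)

definition metzler :: "real mat \<Rightarrow> bool" where
  "metzler A \<longleftrightarrow> dim_row A = dim_col A \<and>
     (\<forall>i < dim_row A. \<forall>j < dim_col A. i \<noteq> j \<longrightarrow> A $$ (i,j) \<ge> 0)"

definition hurwitz :: "real mat \<Rightarrow> bool" where
  "hurwitz A \<longleftrightarrow> dim_row A = dim_col A \<and>
     (\<forall>l. eigenvalue (map_mat complex_of_real A) l \<longrightarrow> Re l < 0)"

definition minv :: "real mat \<Rightarrow> real mat" where
  "minv A = (SOME B. B \<in> carrier_mat (dim_row A) (dim_row A) \<and>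
                     A * B = 1\<^sub>m (dim_row A) \<and> B * A = 1\<^sub>m (dim_row A))"

definition jacobian :: "(real vec \<Rightarrow> real vec) \<Rightarrow> real vec \<Rightarrow> real mat" where
  "jacobian F w = mat (dim_vec w) (dim_vec w)
     (\<lambda>(i,j). deriv (\<lambda>t. F (w + t \<cdot>\<^sub>v unit_vec (dim_vec w) j) $ i) 0)"

(* State w \<in> R^(n+2): w$i = x_(i+1) for i<n, w$n = z1, w$(n+1) = z2. *)
definition field :: "nat \<Rightarrow> real mat \<Rightarrow> real vec \<Rightarrow> real \<Rightarrow> real \<Rightarrow> real \<Rightarrow> real
                      \<Rightarrow> real vec \<Rightarrow> real vec" where
  "field n A b0 mu theta eta kp w =
     (let x = vec n (\<lambda>i. w $ i); z1 = w $ n; z2 = w $ (n+1); xn = w $ (n-1) in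
      vec (n+2) (\<lambda>i. if i < n then
                        (A *\<^sub>v x) $ i - kp * xn * z2 * (unit_vec n (n-1)) $ i + b0 $ i
                      else if i = n then mu - kp * eta * z1 * z2
                      else theta * xn - kp * eta * z1 * z2))"

end

theory Submission imports Defs "Jordan_Normal_Form.Spectral_Radius" begin


lemma mv_sum: assumes "A \<in> carrier_mat n m" "v \<in> carrier_vec m" "i < n"
  shows "(A *\<^sub>v v) $ i = (\<Sum>k<m. A $$ (i,k) * v $ k)"
  using assms by (auto simp: scalar_prod_def atLeast0LessThan intro!: sum.cong)

lemma pow_growth:
  fixes C :: "real mat" and z :: "real Matrix.vec"
  assumes C: "C \<in> carrier_mat n n" and Cnn: "\<forall>i<n. \<forall>j<n. C $$ (i,j) \<ge> 0" and t: "t \<ge> 0"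
  shows "z \<in> carrier_vec n \<Longrightarrow> \<forall>i<n. z $ i \<ge> 0 \<Longrightarrow> \<forall>i<n. (C *\<^sub>v z) $ i \<ge> t * z $ i
     \<Longrightarrow> \<forall>i<n. (C ^\<^sub>m k *\<^sub>v z) $ i \<ge> t ^ k * z $ i"
proof (induction k arbitrary: z)
  case 0
  then show ?case using C by simp
next
  case (Suc k)
  define z' where "z' = C *\<^sub>v z"
  have z': "z' \<in> carrier_vec n" unfolding z'_def by (rule mult_mat_vec_carrier[OF C Suc.prems(1)])
  have z'nn: "\<forall>i<n. z' $ i \<ge> 0" using Suc.prems t unfolding z'_def
    by (meson mult_nonneg_nonneg order_trans)
  have "\<forall>i<n. (C *\<^sub>v z') $ i \<ge> t * z' $ i"
  proof (intro allI impI)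
    fix i assume i: "i < n"
    have "t * z' $ i = (\<Sum>k<n. C $$ (i,k) * (t * z $ k))"
      unfolding z'_def using mv_sum[OF C Suc.prems(1) i]
      by (simp add: sum_distrib_left algebra_simps)
    also have "\<dots> \<le> (\<Sum>k<n. C $$ (i,k) * z' $ k)"
      using Cnn Suc.prems(3) i by (intro sum_mono mult_left_mono) (auto simp: z'_def)
    also have "\<dots> = (C *\<^sub>v z') $ i" using mv_sum[OF C z' i] by simp
    finally show "t * z' $ i \<le> (C *\<^sub>v z') $ i" .
  qed
  from Suc.IH[OF z' z'nn this] have IH: "\<forall>i<n. t ^ k * z' $ i \<le> (C ^\<^sub>m k *\<^sub>v z') $ i" .
  show ?case
  proof (intro allI impI)
    fix i assume i: "i < n"
    have "(C ^\<^sub>m Suc k *\<^sub>v z) = C ^\<^sub>m k *\<^sub>v z'"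
      unfolding z'_def using C Suc.prems(1) by (simp add: assoc_mult_mat_vec[of _ n n _ n])
    moreover have "t ^ Suc k * z $ i \<le> t ^ k * z' $ i"
      using Suc.prems(3) i t mult_left_mono[of "t * z $ i" "(C *\<^sub>v z) $ i" "t ^ k"]
      by (simp add: z'_def algebra_simps)
    ultimately show "t ^ Suc k * z $ i \<le> (C ^\<^sub>m Suc k *\<^sub>v z) $ i" using IH i
      by (metis order_trans)
  qed
qed

lemma KL:
  fixes A :: "real mat" and y :: "real Matrix.vec"
  assumes A: "A \<in> carrier_mat n n" and metz: "metzler A" and hur: "hurwitz A"
    and y: "y \<in> carrier_vec n" and ynn: "\<forall>i<n. y $ i \<ge> 0" and Ay: "\<forall>i<n. (A *\<^sub>v y) $ i \<ge> 0"
  shows "\<forall>i<n. y $ i = 0"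
proof (rule ccontr)
  assume "\<not> ?thesis"
  then obtain i0 where i0: "i0 < n" "y $ i0 \<noteq> 0" by auto
  with ynn have yi0: "y $ i0 > 0" by force
  have n0: "n > 0" using i0 by auto
  define Ac where "Ac = map_mat complex_of_real A"
  have Ac: "Ac \<in> carrier_mat n n" using A by (simp add: Ac_def)
  define S where "S = spectrum Ac"
  have finS: "finite S" using card_finite_spectrum[OF Ac] S_def by auto
  have reS: "\<forall>l\<in>S. Re l < 0" using hur unfolding hurwitz_def S_def spectrum_def Ac_def by auto
  define s where "s = 1 + (\<Sum>i<n. \<bar>A$$(i,i)\<bar>) + (\<Sum>l\<in>S. (cmod l)^2 / (- 2 * Re l))"
  have sum2nn: "(\<Sum>l\<in>S. (cmod l)^2 / (- 2 * Re l)) \<ge> 0"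
    using reS by (intro sum_nonneg divide_nonneg_pos) auto
  have s_ge: "(cmod l)^2 / (- 2 * Re l) < s" if "l \<in> S" for l
  proof -
    have "(cmod l)^2 / (- 2 * Re l) \<le> (\<Sum>l\<in>S. (cmod l)^2 / (- 2 * Re l))"
      by (rule member_le_sum) (use that reS finS in \<open>auto intro!: divide_nonneg_neg\<close>)
    moreover have "(\<Sum>i<n. \<bar>A$$(i,i)\<bar>) \<ge> 0" by (simp add: sum_nonneg)
    ultimately show ?thesis unfolding s_def by linarith
  qed
  have s_diag: "s + A$$(i,i) > 0" if "i < n" for i
  proof -
    have "\<bar>A$$(i,i)\<bar> \<le> (\<Sum>i<n. \<bar>A$$(i,i)\<bar>)"
      by (rule member_le_sum) (use that in auto)
    then show ?thesis unfolding s_def using sum2nn by linarith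
  qed
  have s0: "s > 0" using s_diag[OF i0(1)] s_def sum2nn
    by (smt (verit, best) s_diag sum_nonneg abs_ge_zero)
  have normS: "cmod (complex_of_real s + l) < s" if "l \<in> S" for l
  proof -
    have rl: "Re l < 0" using reS that by auto
    have d: "- 2 * Re l > 0" using rl by simp
    have "(cmod l)^2 < s * (- 2 * Re l)" using s_ge[OF that] pos_divide_less_eq[OF d] by blast
    hence "(cmod (complex_of_real s + l))^2 < s^2"
      unfolding cmod_power2 by (simp add: power2_eq_square algebra_simps)
    thus ?thesis using s0 by (simp add: power_less_imp_less_base)
  qed
  define m where "m = Max (insert (1/2) ((\<lambda>l. cmod (complex_of_real s + l) / s) ` S))"
  have m1: "m < 1" unfolding m_def using finS normS s0 by (subst Max_less_iff) auto
  have mS: "cmod (complex_of_real s + l) / s \<le> m" if "l \<in> S" for l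
    unfolding m_def using finS that by (intro Max_ge) auto
  have m0: "m \<ge> 1/2" unfolding m_def using finS by (intro Max_ge) auto
  define t where "t = 2 / (1 + m)"
  have t1: "t > 1" using m1 m0 by (simp add: t_def)
  have tm: "t * m < 1" using m1 m0 by (simp add: t_def field_simps)
  define Cr where "Cr = mat n n (\<lambda>(i,j). t / s * (A$$(i,j) + (if i = j then s else 0)))"
  have Cr: "Cr \<in> carrier_mat n n" by (simp add: Cr_def)
  have Cnn: "\<forall>i<n. \<forall>j<n. Cr $$ (i,j) \<ge> 0"
  proof (intro allI impI)
    fix i j assume ij: "i < n" "j < n"
    have "A$$(i,j) + (if i = j then s else 0) \<ge> 0"
      using metz A ij s_diag[OF ij(1)] unfolding metzler_def by auto
    thus "Cr $$ (i,j) \<ge> 0" using ij t1 s0 by (simp add: Cr_def)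
  qed
  have Cz: "(Cr *\<^sub>v z) $ i = t / s * ((A *\<^sub>v z) $ i + s * z $ i)"
    if z: "z \<in> carrier_vec n" and i: "i < n" for z i
  proof -
    have "(Cr *\<^sub>v z) $ i = (\<Sum>k<n. t / s * (A$$(i,k) * z $ k + (if i = k then s * z $ k else 0)))"
      using mv_sum[OF Cr z i] i by (auto simp: Cr_def algebra_simps intro!: sum.cong)
    also have "\<dots> = t / s * ((\<Sum>k<n. A$$(i,k) * z $ k) + (\<Sum>k<n. (if i = k then s * z $ k else 0)))"
      by (simp only: sum_distrib_left[symmetric] sum.distrib)
    also have "(\<Sum>k<n. (if i = k then s * z $ k else 0)) = s * z $ i" using i by simp
    finally show ?thesis using mv_sum[OF A z i] by simp
  qed
  define Cc where "Cc = map_mat complex_of_real Cr"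
  have Cc: "Cc \<in> carrier_mat n n" using Cr by (simp add: Cc_def)
  have spec: "spectral_radius Cc < 1"
    unfolding spectral_radius_def
  proof (subst Max_less_iff)
    show "finite (cmod ` spectrum Cc)" using card_finite_spectrum[OF Cc] by auto
    show "cmod ` spectrum Cc \<noteq> {}" using spectrum_non_empty[OF Cc n0] by auto
    show "\<forall>a\<in>cmod ` spectrum Cc. a < 1"
    proof
      fix a assume "a \<in> cmod ` spectrum Cc"
      then obtain mu where a: "a = cmod mu" and mu: "eigenvalue Cc mu"
        unfolding spectrum_def by auto
      then obtain v where v: "v \<in> carrier_vec n" "v \<noteq> 0\<^sub>v n" "Cc *\<^sub>v v = mu \<cdot>\<^sub>v v"
        unfolding eigenvalue_def eigenvector_def using Cc by auto
      have "Ac *\<^sub>v v = (complex_of_real s * mu / complex_of_real t - complex_of_real s) \<cdot>\<^sub>v v"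
      proof (rule eq_vecI)
        show "dim_vec (Ac *\<^sub>v v) = dim_vec ((complex_of_real s * mu / complex_of_real t - complex_of_real s) \<cdot>\<^sub>v v)"
          using Ac v by simp
        fix i assume "i < dim_vec ((complex_of_real s * mu / complex_of_real t - complex_of_real s) \<cdot>\<^sub>v v)"
        hence i: "i < n" using v by simp
        have "(Cc *\<^sub>v v) $ i = (\<Sum>k<n. complex_of_real (t / s) * (Ac$$(i,k) * v $ k + (if i = k then complex_of_real s * v $ k else 0)))"
          using mv_sum[OF Cc v(1) i] i Cr A by (auto simp: Cc_def Cr_def Ac_def algebra_simps intro!: sum.cong)
        also have "\<dots> = complex_of_real (t / s) * ((\<Sum>k<n. Ac$$(i,k) * v $ k) + (\<Sum>k<n. (if i = k then complex_of_real s * v $ k else 0)))"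
          by (simp only: sum_distrib_left[symmetric] sum.distrib)
        also have "(\<Sum>k<n. (if i = k then complex_of_real s * v $ k else 0)) = complex_of_real s * v $ i" using i by simp
        finally have "complex_of_real (t / s) * ((Ac *\<^sub>v v) $ i + complex_of_real s * v $ i) = mu * v $ i"
          using mv_sum[OF Ac v(1) i] v(3) i v(1) by simp
        thus "(Ac *\<^sub>v v) $ i = ((complex_of_real s * mu / complex_of_real t - complex_of_real s) \<cdot>\<^sub>v v) $ i"
          using i v(1) s0 t1 by (simp add: field_simps)
      qed
      hence "complex_of_real s * mu / complex_of_real t - complex_of_real s \<in> S"
        unfolding S_def spectrum_def eigenvalue_def eigenvector_def using v Ac by auto
      from mS[OF this] have "cmod (complex_of_real s * mu / complex_of_real t) / s \<le> m" by simp
      hence "cmod mu / t \<le> m" using s0 t1 by (simp add: norm_divide norm_mult)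
      hence "cmod mu \<le> t * m" using t1 by (simp add: divide_le_eq mult.commute)
      thus "a < 1" using a tm by simp
    qed
  qed
  obtain c where c: "\<forall>k. norm_bound (Cc ^\<^sub>m k) c"
    using spectral_radius_jnf_norm_bound_less_1_upper_triangular[OF Cc spec] by auto
  have cb: "\<bar>(Cr ^\<^sub>m k) $$ (i,j)\<bar> \<le> c" if "i < n" "j < n" for k i j
  proof -
    have "Cc ^\<^sub>m k = map_mat complex_of_real (Cr ^\<^sub>m k)"
      unfolding Cc_def by (rule of_real_hom.mat_hom_pow[OF Cr, symmetric])
    with c[rule_format, of k] that Cr show ?thesis by (auto simp: norm_bound_def)
  qed
  have grow: "\<forall>i<n. (Cr ^\<^sub>m k *\<^sub>v y) $ i \<ge> t ^ k * y $ i" for k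
  proof (rule pow_growth[OF Cr Cnn _ y ynn])
    show "t \<ge> 0" using t1 by simp
    show "\<forall>i<n. t * y $ i \<le> (Cr *\<^sub>v y) $ i"
    proof (intro allI impI)
      fix i assume i: "i < n"
      have "t / s * ((A *\<^sub>v y) $ i) \<ge> 0" using Ay i t1 s0 by simp
      thus "t * y $ i \<le> (Cr *\<^sub>v y) $ i" unfolding Cz[OF y i] using s0
        by (simp add: algebra_simps)
    qed
  qed
  define Y where "Y = (\<Sum>j<n. y $ j)"
  have bnd: "t ^ k * y $ i0 \<le> c * Y" for k
  proof -
    have "(Cr ^\<^sub>m k *\<^sub>v y) $ i0 = (\<Sum>j<n. (Cr ^\<^sub>m k) $$ (i0,j) * y $ j)"
      by (rule mv_sum[OF pow_carrier_mat[OF Cr] y i0(1)])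
    also have "\<dots> \<le> (\<Sum>j<n. c * y $ j)"
    proof (rule sum_mono)
      fix j assume "j \<in> {..<n}"
      hence j: "j < n" by auto
      have "(Cr ^\<^sub>m k) $$ (i0,j) \<le> c" using cb[OF i0(1) j, of k] by simp
      thus "(Cr ^\<^sub>m k) $$ (i0,j) * y $ j \<le> c * y $ j" using ynn j by (simp add: mult_right_mono)
    qed
    finally have "(Cr ^\<^sub>m k *\<^sub>v y) $ i0 \<le> c * Y" by (simp add: Y_def sum_distrib_left)
    thus ?thesis using grow[of k] i0(1) by force
  qed
  obtain k where "c * Y / y $ i0 < t ^ k" using real_arch_pow[OF t1] by blast
  with bnd[of k] yi0 show False by (simp add: divide_less_eq)
qed

definition Jx :: "nat \<Rightarrow> real mat \<Rightarrow> real \<Rightarrow> real \<Rightarrow> real \<Rightarrow> real Matrix.vec \<Rightarrow> real mat" where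
  "Jx n A eta kp theta w = mat (n+2) (n+2) (\<lambda>(i,j).
     if i < n then (if j < n then A$$(i,j) else 0)
        - (if i = n-1 then kp * ((if j = n-1 then w$(n+1) else 0) + (if j = n+1 then w$(n-1) else 0)) else 0)
     else if i = n then - kp*eta*((if j = n then w$(n+1) else 0) + (if j = n+1 then w$n else 0))
     else (if j = n-1 then theta else 0) - kp*eta*((if j = n then w$(n+1) else 0) + (if j = n+1 then w$n else 0)))"

lemma d1: "((\<lambda>t::real. (\<Sum>k<n. a k * (w k + t * d k)) - kp * (x + t*p) * (y + t*q) * e + c) has_real_derivative
   ((\<Sum>k<n. a k * d k) - kp*(p*y + x*q)*e)) (at 0)"
  by (auto intro!: derivative_eq_intros simp: algebra_simps)
lemma d2: "((\<lambda>t::real. mu - kp * eta * (x + t*p) * (y + t*q)) has_real_derivative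
   (- kp*eta*(p*y + x*q))) (at 0)"
  by (auto intro!: derivative_eq_intros simp: algebra_simps)
lemma d3: "((\<lambda>t::real. theta * (z + t * r) - kp * eta * (x + t*p) * (y + t*q)) has_real_derivative
   (theta * r - kp*eta*(p*y + x*q))) (at 0)"
  by (auto intro!: derivative_eq_intros simp: algebra_simps)

lemma field_idx:
  fixes w :: "real Matrix.vec"
  assumes n: "n \<ge> 1" and A: "A \<in> carrier_mat n n" and i: "i < n+2"
  shows "field n A b0 mu theta eta kp w $ i =
    (if i < n then (\<Sum>k<n. A$$(i,k) * w$k) - kp * w$(n-1) * w$(n+1) * (if i = n-1 then 1 else 0) + b0$i
     else if i = n then mu - kp*eta*w$n*w$(n+1) else theta*w$(n-1) - kp*eta*w$n*w$(n+1))"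
proof -
  have x: "vec n (\<lambda>k. w $ k) \<in> carrier_vec n" by simp
  show ?thesis unfolding field_def Let_def using i n
    by (auto simp: mv_sum[OF A x] intro!: sum.cong)
qed

lemma jac_entry:
  fixes w :: "real Matrix.vec"
  assumes n: "n \<ge> 1" and A: "A \<in> carrier_mat n n" and b0: "b0 \<in> carrier_vec n"
    and w: "w \<in> carrier_vec (n+2)" and i: "i < n+2" and j: "j < n+2"
  shows "deriv (\<lambda>t. field n A b0 mu theta eta kp (w + t \<cdot>\<^sub>v unit_vec (n+2) j) $ i) 0 = Jx n A eta kp theta w $$ (i,j)"
proof -
  define d where "d = (\<lambda>k. if k = j then (1::real) else 0)"
  have wt: "(w + t \<cdot>\<^sub>v unit_vec (n+2) j) $ k = w $ k + t * d k" if "k < n+2" for t k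
    using w that j by (simp add: d_def)
  have F: "field n A b0 mu theta eta kp (w + t \<cdot>\<^sub>v unit_vec (n+2) j) $ i =
     (if i < n then (\<Sum>k<n. A$$(i,k) * (w$k + t * d k)) - kp * (w$(n-1) + t * d (n-1)) * (w$(n+1) + t * d (n+1)) * (if i = n-1 then 1 else 0) + b0 $ i
      else if i = n then mu - kp*eta*(w$n + t*d n)*(w$(n+1) + t*d(n+1))
      else theta * (w$(n-1) + t*d(n-1)) - kp*eta*(w$n + t*d n)*(w$(n+1) + t*d(n+1)))" for t
  proof -
    have "(\<Sum>k<n. A$$(i,k) * (w + t \<cdot>\<^sub>v unit_vec (n+2) j) $ k) = (\<Sum>k<n. A$$(i,k) * (w$k + t * d k))"
      by (rule sum.cong[OF refl]) (use w j in \<open>auto simp: d_def\<close>)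
    then show ?thesis using field_idx[OF n A i, of b0 mu theta eta kp] n w j
      by (simp add: d_def)
  qed
  have D: "((\<lambda>t. field n A b0 mu theta eta kp (w + t \<cdot>\<^sub>v unit_vec (n+2) j) $ i) has_real_derivative
     (if i < n then (\<Sum>k<n. A$$(i,k) * d k) - kp * (d (n-1) * w$(n+1) + w$(n-1) * d (n+1)) * (if i = n-1 then 1 else 0)
      else if i = n then - kp*eta*(d n * w$(n+1) + w$n * d (n+1))
      else theta * d (n-1) - kp*eta*(d n * w$(n+1) + w$n * d (n+1)))) (at 0)"
  proof (cases "i < n")
    case True
    show ?thesis unfolding F if_P[OF True] by (rule d1)
  next
    case False
    show ?thesis
    proof (cases "i = n")
      case True
      show ?thesis unfolding F if_not_P[OF False] if_P[OF True] by (rule d2)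
    next
      case F2: False
      show ?thesis unfolding F if_not_P[OF False] if_not_P[OF F2] by (rule d3)
    qed
  qed
  have sumd0: "(\<Sum>k<n. A$$(i,k) * d k) = (\<Sum>k<n. if k = j then A$$(i,k) else 0)"
    by (intro sum.cong) (auto simp: d_def)
  have sumd: "(\<Sum>k<n. A$$(i,k) * d k) = (if j < n then A$$(i,j) else 0)"
    unfolding sumd0 by simp
  show ?thesis
    unfolding DERIV_imp_deriv[OF D] sumd using i j n
    by (simp add: Jx_def d_def)
qed

lemma jacobian_Jx:
  fixes w :: "real Matrix.vec"
  assumes n: "n \<ge> 1" and A: "A \<in> carrier_mat n n" and b0: "b0 \<in> carrier_vec n"
    and w: "w \<in> carrier_vec (n+2)"
  shows "jacobian (field n A b0 mu theta eta kp) w = Jx n A eta kp theta w"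
  unfolding jacobian_def using w jac_entry[OF n A b0 w]
  by (intro eq_matI) (auto simp: Jx_def)

lemma KL2:
  fixes A :: "real mat" and x :: "real Matrix.vec"
  assumes A: "A \<in> carrier_mat n n" and metz: "metzler A" and hur: "hurwitz A"
    and x: "x \<in> carrier_vec n" and Ax: "\<forall>i<n. (A *\<^sub>v x) $ i \<ge> 0"
  shows "\<forall>i<n. x $ i \<le> 0"
proof -
  define y where "y = vec n (\<lambda>i. max (x $ i) 0)"
  have y: "y \<in> carrier_vec n" by (simp add: y_def)
  have ynn: "\<forall>i<n. y $ i \<ge> 0" by (simp add: y_def)
  have off: "A $$ (i,k) \<ge> 0" if "i < n" "k < n" "i \<noteq> k" for i k
    using metz A that unfolding metzler_def by auto
  have "\<forall>i<n. (A *\<^sub>v y) $ i \<ge> 0"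
  proof (intro allI impI)
    fix i assume i: "i < n"
    show "(A *\<^sub>v y) $ i \<ge> 0"
    proof (cases "x $ i > 0")
      case True
      have "0 \<le> (\<Sum>k<n. A$$(i,k) * x $ k)" using Ax i mv_sum[OF A x i] by metis
      also have "\<dots> \<le> (\<Sum>k<n. A$$(i,k) * y $ k)"
      proof (rule sum_mono)
        fix k assume k: "k \<in> {..<n}"
        show "A$$(i,k) * x $ k \<le> A$$(i,k) * y $ k"
        proof (cases "k = i")
          case True
          then show ?thesis using \<open>x $ i > 0\<close> k by (simp add: y_def)
        next
          case False
          then show ?thesis using off[OF i _ ] k by (intro mult_left_mono) (auto simp: y_def)
        qed
      qed
      finally show ?thesis using mv_sum[OF A y i] by simp
    next
      case False
      have "0 \<le> (\<Sum>k<n. A$$(i,k) * y $ k)"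
      proof (rule sum_nonneg)
        fix k assume k: "k \<in> {..<n}"
        show "0 \<le> A$$(i,k) * y $ k"
        proof (cases "k = i")
          case True
          then show ?thesis using False k by (simp add: y_def)
        next
          case F2: False
          then show ?thesis using off[OF i] k ynn by (intro mult_nonneg_nonneg) auto
        qed
      qed
      thus ?thesis using mv_sum[OF A y i] by simp
    qed
  qed
  from KL[OF A metz hur y ynn this] show ?thesis by (auto simp: y_def)
qed

lemma A_inj:
  fixes A :: "real mat" and x :: "real Matrix.vec"
  assumes A: "A \<in> carrier_mat n n" and metz: "metzler A" and hur: "hurwitz A"
    and x: "x \<in> carrier_vec n" and Ax: "A *\<^sub>v x = 0\<^sub>v n"
  shows "x = 0\<^sub>v n"
proof -
  have "\<forall>i<n. (A *\<^sub>v x) $ i \<ge> 0" using Ax by simp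
  from KL2[OF A metz hur x this] have le: "\<forall>i<n. x $ i \<le> 0" .
  have mx: "-x \<in> carrier_vec n" using x by simp
  have "\<forall>i<n. (A *\<^sub>v (-x)) $ i \<ge> 0"
  proof (intro allI impI)
    fix i assume i: "i < n"
    have "(A *\<^sub>v (-x)) $ i = - (\<Sum>k<n. A$$(i,k) * x $ k)"
      using mv_sum[OF A mx i] x by (simp add: sum_negf)
    also have "\<dots> = - (A *\<^sub>v x) $ i" using mv_sum[OF A x i] by simp
    finally show "(A *\<^sub>v (-x)) $ i \<ge> 0" using Ax i by simp
  qed
  from KL2[OF A metz hur mx this] have "\<forall>i<n. x $ i \<ge> 0" using x by simp
  with le x show ?thesis by (intro eq_vecI) (auto intro: antisym)
qed

lemma minv_props:
  fixes A :: "real mat"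
  assumes A: "A \<in> carrier_mat n n" and metz: "metzler A" and hur: "hurwitz A"
  shows "minv A \<in> carrier_mat n n" "A * minv A = 1\<^sub>m n" "minv A * A = 1\<^sub>m n"
proof -
  have "det A \<noteq> 0"
    using det_0_iff_vec_prod_zero[OF A] A_inj[OF A metz hur] by auto
  from det_non_zero_imp_unit[OF A this, of undefined]
  obtain B where B: "B \<in> carrier_mat n n" "A * B = 1\<^sub>m n" "B * A = 1\<^sub>m n"
    unfolding Units_def ring_mat_def by auto
  have ex: "\<exists>B. B \<in> carrier_mat (dim_row A) (dim_row A) \<and> A * B = 1\<^sub>m (dim_row A) \<and> B * A = 1\<^sub>m (dim_row A)"
    using B A by auto
  from someI_ex[OF ex] A show "minv A \<in> carrier_mat n n" "A * minv A = 1\<^sub>m n" "minv A * A = 1\<^sub>m n"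
    unfolding minv_def by auto
qed

lemma modulus:
  fixes A :: "real mat" and v :: "nat \<Rightarrow> complex"
  assumes A: "A \<in> carrier_mat n n" and metz: "metzler A" and i: "i < n"
    and eq: "l * v i = (\<Sum>k<n. complex_of_real (A$$(i,k)) * v k) + f"
  shows "cmod ((l - complex_of_real (A$$(i,i))) * v i - f) \<le> (\<Sum>k<n. A$$(i,k) * cmod (v k)) - A$$(i,i) * cmod (v i)"
proof -
  let ?R = "{..<n} - {i}"
  have off: "A $$ (i,k) \<ge> 0" if "k \<in> ?R" for k
    using metz A that i unfolding metzler_def by auto
  have s1: "(\<Sum>k<n. complex_of_real (A$$(i,k)) * v k) = complex_of_real (A$$(i,i)) * v i + (\<Sum>k\<in>?R. complex_of_real (A$$(i,k)) * v k)"
    using i by (subst sum.remove[of _ i]) auto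
  have s2: "(\<Sum>k<n. A$$(i,k) * cmod (v k)) = A$$(i,i) * cmod (v i) + (\<Sum>k\<in>?R. A$$(i,k) * cmod (v k))"
    using i by (subst sum.remove[of _ i]) auto
  have "(l - complex_of_real (A$$(i,i))) * v i - f = (\<Sum>k\<in>?R. complex_of_real (A$$(i,k)) * v k)"
    using eq s1 by (simp add: algebra_simps)
  also have "cmod \<dots> \<le> (\<Sum>k\<in>?R. cmod (complex_of_real (A$$(i,k)) * v k))" by (rule norm_sum)
  also have "\<dots> = (\<Sum>k\<in>?R. A$$(i,k) * cmod (v k))"
    using off by (intro sum.cong) (auto simp: norm_mult)
  finally show ?thesis using s2 by simp
qed

lemma modulus0:
  fixes A :: "real mat" and v :: "nat \<Rightarrow> complex"
  assumes A: "A \<in> carrier_mat n n" and metz: "metzler A" and i: "i < n" and rl: "Re l \<ge> 0"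
    and eq: "l * v i = (\<Sum>k<n. complex_of_real (A$$(i,k)) * v k)"
  shows "(\<Sum>k<n. A$$(i,k) * cmod (v k)) \<ge> 0"
proof -
  have m: "cmod ((l - complex_of_real (A$$(i,i))) * v i - 0) \<le> (\<Sum>k<n. A$$(i,k) * cmod (v k)) - A$$(i,i) * cmod (v i)"
    by (rule modulus[OF A metz i]) (use eq in simp)
  have "- A$$(i,i) \<le> Re (l - complex_of_real (A$$(i,i)))" using rl by simp
  also have "\<dots> \<le> cmod (l - complex_of_real (A$$(i,i)))" by (rule complex_Re_le_cmod)
  finally have "- A$$(i,i) * cmod (v i) \<le> cmod (l - complex_of_real (A$$(i,i))) * cmod (v i)"
    by (intro mult_right_mono) auto
  with m show ?thesis by (simp add: norm_mult)
qed

lemma Re_pos_div: "a > 0 \<Longrightarrow> Re z > 0 \<Longrightarrow> Re (complex_of_real a / z) > 0"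
  by (simp add: Re_divide divide_pos_pos sum_power2_gt_zero_iff)

lemma Re_frac_nonneg: assumes "d > 0" "c > 0" "Re l \<ge> 0" shows "Re (l * complex_of_real d / (l + complex_of_real c)) \<ge> 0"
proof -
  have a: "0 \<le> Re l * d * (Re l + c)" using assms by simp
  have b: "0 \<le> Im l * d * Im l"
    by (metis assms(1) less_imp_le mult.commute mult.left_commute mult_nonneg_nonneg zero_le_square)
  show ?thesis
    apply (simp add: Re_divide)
    apply (rule divide_nonneg_nonneg)
    using a b by simp_all
qed

lemma core:
  fixes A :: "real mat" and v :: "nat \<Rightarrow> complex"
  assumes A: "A \<in> carrier_mat n n" and metz: "metzler A" and hur: "hurwitz A" and n: "n \<ge> 1"
    and us: "us > 0" and c: "c > 0" and d: "d > 0" and g: "g > 0" and th: "theta > 0" and rl: "Re l \<ge> 0"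
    and rows: "\<forall>i<n. l * v i = (\<Sum>k<n. complex_of_real (A$$(i,k)) * v k)
         - (if i = n-1 then complex_of_real us * v (n-1) + complex_of_real g * q else 0)"
    and rowp: "l * p = - (complex_of_real c * p + complex_of_real d * q)"
    and rowq: "l * q = complex_of_real theta * v (n-1) - (complex_of_real c * p + complex_of_real d * q)"
  shows "(\<forall>k<n. v k = 0) \<and> p = 0 \<and> q = 0"
proof -
  define N where "N = n - 1"
  have N: "N < n" using n by (simp add: N_def)
  define y where "y = vec n (\<lambda>k. cmod (v k))"
  have y: "y \<in> carrier_vec n" by (simp add: y_def)
  have ynn: "\<forall>i<n. y $ i \<ge> 0" by (simp add: y_def)
  have Ay: "(A *\<^sub>v y) $ i = (\<Sum>k<n. A$$(i,k) * cmod (v k))" if "i < n" for i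
    using mv_sum[OF A y that] by (simp add: y_def)
  have other: "(A *\<^sub>v y) $ i \<ge> 0" if "i < n" "i \<noteq> N" for i
    unfolding Ay[OF that(1)]
    by (rule modulus0[OF A metz that(1) rl]) (use rows that in \<open>auto simp: N_def\<close>)
  have rowN: "l * v N = (\<Sum>k<n. complex_of_real (A$$(N,k)) * v k) + (- (complex_of_real us * v N + complex_of_real g * q))"
    using rows N by (simp add: N_def)
  have mN: "cmod ((l - complex_of_real (A$$(N,N))) * v N + (complex_of_real us * v N + complex_of_real g * q))
      \<le> (A *\<^sub>v y) $ N - A$$(N,N) * cmod (v N)"
    unfolding Ay[OF N] using modulus[OF A metz N rowN] by (simp only: diff_minus_eq_add)
  have vN: "v N = 0"
  proof (rule ccontr)
    assume vN: "v N \<noteq> 0"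
    have AyN: "(A *\<^sub>v y) $ N < 0"
    proof (rule ccontr)
      assume "\<not> (A *\<^sub>v y) $ N < 0"
      hence "\<forall>i<n. (A *\<^sub>v y) $ i \<ge> 0" using other by force
      from KL[OF A metz hur y ynn this] N vN show False by (simp add: y_def)
    qed
    define S where "S = (l - complex_of_real (A$$(N,N))) * v N + (complex_of_real us * v N + complex_of_real g * q)"
    define Phi where "Phi = - (complex_of_real g * q) / v N"
    have PhiS: "Phi = l - complex_of_real (A$$(N,N)) + complex_of_real us - S / v N"
      using vN by (simp add: Phi_def S_def field_simps)
    have "cmod S < - A$$(N,N) * cmod (v N)" using mN AyN unfolding S_def by simp
    hence "cmod S / cmod (v N) < - A$$(N,N)" using vN by (simp add: divide_less_eq)
    moreover have "Re (S / v N) \<le> cmod S / cmod (v N)"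
      using complex_Re_le_cmod[of "S / v N"] by (simp add: norm_divide)
    ultimately have RePhi: "Re Phi > 0" unfolding PhiS using rl us by simp
    have q0: "q \<noteq> 0"
    proof
      assume "q = 0"
      hence "Phi = 0" by (simp add: Phi_def)
      with RePhi show False by simp
    qed
    have lc: "l + complex_of_real c \<noteq> 0"
    proof
      assume "l + complex_of_real c = 0"
      hence "Re (l + complex_of_real c) = 0" by simp
      with rl c show False by simp
    qed
    have Phi0: "Phi \<noteq> 0" using RePhi by auto
    have e: "(l + complex_of_real c) * p = - (complex_of_real d * q)"
      unfolding distrib_right rowp by simp
    have hp: "p = - (complex_of_real d * q) / (l + complex_of_real c)"
    proof -
      have "p = ((l + complex_of_real c) * p) / (l + complex_of_real c)" using lc by simp
      also have "\<dots> = - (complex_of_real d * q) / (l + complex_of_real c)" unfolding e ..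
      finally show ?thesis .
    qed
    have hv: "v N = - (complex_of_real g * q) / Phi"
      using Phi0 vN by (simp add: Phi_def field_simps)
    have hq: "complex_of_real theta * v N = l * (q - p)"
    proof -
      have "l * (q - p) = l * q - l * p" by (simp add: right_diff_distrib)
      also have "\<dots> = complex_of_real theta * v N" unfolding rowq rowp N_def by simp
      finally show ?thesis by simp
    qed
    have "q * (complex_of_real (theta * g) / Phi + l + l * complex_of_real d / (l + complex_of_real c)) = 0"
    proof -
      have t1: "complex_of_real (theta * g) * q / Phi = - (complex_of_real theta * v N)"
        unfolding hv by simp
      have t2: "l * complex_of_real d * q / (l + complex_of_real c) = - (l * p)"
        unfolding hp by simp
      have "q * (complex_of_real (theta * g) / Phi + l + l * complex_of_real d / (l + complex_of_real c))
          = complex_of_real (theta * g) * q / Phi + l * q + l * complex_of_real d * q / (l + complex_of_real c)"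
        by (simp add: distrib_left mult_ac)
      also have "\<dots> = - (complex_of_real theta * v N) + l * q - l * p" unfolding t1 t2 by simp
      also have "\<dots> = 0" unfolding hq by (simp add: right_diff_distrib)
      finally show ?thesis .
    qed
    hence key: "complex_of_real (theta * g) / Phi + l + l * complex_of_real d / (l + complex_of_real c) = 0"
      using q0 by simp
    have "Re (complex_of_real (theta * g) / Phi) > 0" using Re_pos_div[OF _ RePhi, of "theta * g"] th g by (simp only: of_real_mult mult_pos_pos)
    moreover have "Re (l * complex_of_real d / (l + complex_of_real c)) \<ge> 0" by (rule Re_frac_nonneg[OF d c rl])
    ultimately have "Re (complex_of_real (theta * g) / Phi + l + l * complex_of_real d / (l + complex_of_real c)) > 0"
      using rl by simp
    with key show False by simp
  qed
  have "cmod (complex_of_real g * q) \<le> (A *\<^sub>v y) $ N" using mN vN by (simp del: index_mult_mat_vec)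
  hence "(A *\<^sub>v y) $ N \<ge> 0" using norm_ge_zero order_trans by blast
  hence "\<forall>i<n. (A *\<^sub>v y) $ i \<ge> 0" using other by force
  from KL[OF A metz hur y ynn this] have v0: "\<forall>k<n. v k = 0" by (simp add: y_def)
  have "q = 0" using rowN v0 N g by simp
  moreover have "p = 0"
  proof -
    have "(l + complex_of_real c) * p = 0" using rowp \<open>q = 0\<close> by (simp add: algebra_simps)
    moreover have "l + complex_of_real c \<noteq> 0"
    proof
      assume "l + complex_of_real c = 0"
      hence "Re (l + complex_of_real c) = 0" by simp
      with rl c show False by simp
    qed
    ultimately show ?thesis by simp
  qed
  ultimately show ?thesis using v0 by simp
qed



lemma Jx_entries:
  assumes n: "n \<ge> 1"
  shows "i < n \<Longrightarrow> k < n \<Longrightarrow> Jx n A eta kp theta w $$ (i,k) = A$$(i,k) - (if i = n-1 \<and> k = n-1 then kp*w$(n+1) else 0)"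
    "i < n \<Longrightarrow> Jx n A eta kp theta w $$ (i,n) = 0"
    "i < n \<Longrightarrow> Jx n A eta kp theta w $$ (i,Suc n) = - (if i = n-1 then kp*w$(n-1) else 0)"
    "k < n \<Longrightarrow> Jx n A eta kp theta w $$ (n,k) = 0"
    "Jx n A eta kp theta w $$ (n,n) = - kp*eta*w$(n+1)"
    "Jx n A eta kp theta w $$ (n,Suc n) = - kp*eta*w$n"
    "k < n \<Longrightarrow> Jx n A eta kp theta w $$ (Suc n,k) = (if k = n-1 then theta else 0)"
    "Jx n A eta kp theta w $$ (Suc n,n) = - kp*eta*w$(n+1)"
    "Jx n A eta kp theta w $$ (Suc n,Suc n) = - kp*eta*w$n"
  using n by (auto simp: Jx_def)

lemma sum_delta_c: fixes V :: "complex Matrix.vec" shows "j < n \<Longrightarrow> (\<Sum>k<n. (if k = j then a else 0) * V $ k) = a * V $ j"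
proof -
  assume j: "j < n"
  have "(\<Sum>k<n. (if k = j then a else 0) * V $ k) = (\<Sum>k<n. if k = j then a * V $ k else 0)"
    by (rule sum.cong) auto
  thus ?thesis using j by simp
qed

lemma rowJ:
  fixes V :: "complex Matrix.vec" and w :: "real Matrix.vec"
  assumes n: "n \<ge> 1" and A: "A \<in> carrier_mat n n" and V: "V \<in> carrier_vec (n+2)" and i: "i < n+2"
  shows "(map_mat complex_of_real (Jx n A eta kp theta w) *\<^sub>v V) $ i =
   (if i < n then (\<Sum>k<n. complex_of_real (A$$(i,k)) * V$k)
       - (if i = n-1 then complex_of_real (kp * w$(n+1)) * V$(n-1) + complex_of_real (kp * w$(n-1)) * V$(n+1) else 0)
    else if i = n then - (complex_of_real (kp*eta*w$(n+1)) * V$n + complex_of_real (kp*eta*w$n) * V$(n+1))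
    else complex_of_real theta * V$(n-1) - (complex_of_real (kp*eta*w$(n+1)) * V$n + complex_of_real (kp*eta*w$n) * V$(n+1)))"
proof -
  define J where "J = Jx n A eta kp theta w"
  define Jc where "Jc = map_mat complex_of_real J"
  have Jc: "Jc \<in> carrier_mat (n+2) (n+2)" by (simp add: Jc_def J_def Jx_def)
  have Jci: "Jc $$ (i,k) = complex_of_real (J $$ (i,k))" if "k < n+2" for k
    using that i by (simp add: Jc_def J_def Jx_def)
  have "(Jc *\<^sub>v V) $ i = (\<Sum>k<Suc (Suc n). Jc$$(i,k) * V$k)"
    using mv_sum[OF Jc V i] by simp
  also have "\<dots> = (\<Sum>k<n. complex_of_real (J$$(i,k)) * V$k) + complex_of_real (J$$(i,n)) * V$n
      + complex_of_real (J$$(i,n+1)) * V$(n+1)"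
    using Jci by simp
  finally have e: "(Jc *\<^sub>v V) $ i = \<dots>" .
  have n1: "n - 1 < n" using n by simp
  consider "i < n" | "i = n" | "i = n+1" using i by linarith
  then show ?thesis
  proof cases
    case 1
    have "(\<Sum>k<n. complex_of_real (J$$(i,k)) * V$k) = (\<Sum>k<n. complex_of_real (A$$(i,k)) * V$k
         - (if k = n-1 then (if i = n-1 then complex_of_real (kp*w$(n+1)) else 0) else 0) * V$k)"
      by (rule sum.cong[OF refl]) (use 1 in \<open>auto simp: J_def Jx_entries[OF n] algebra_simps\<close>)
    also have "\<dots> = (\<Sum>k<n. complex_of_real (A$$(i,k)) * V$k) - (if i = n-1 then complex_of_real (kp*w$(n+1)) else 0) * V$(n-1)"
      by (simp only: sum_subtractf sum_delta_c[OF n1])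
    finally show ?thesis using 1 e unfolding Jc_def J_def
      by (auto simp: Jx_entries[OF n])
  next
    case 2
    have "(\<Sum>k<n. complex_of_real (J$$(i,k)) * V$k) = 0"
      by (rule sum.neutral) (use 2 in \<open>auto simp: J_def Jx_entries[OF n]\<close>)
    then show ?thesis using 2 e unfolding Jc_def J_def
      by (auto simp: Jx_entries[OF n])
  next
    case 3
    have "(\<Sum>k<n. complex_of_real (J$$(i,k)) * V$k) = (\<Sum>k<n. (if k = n-1 then complex_of_real theta else 0) * V$k)"
      by (rule sum.cong[OF refl]) (use 3 in \<open>auto simp: J_def Jx_entries[OF n]\<close>)
    also have "\<dots> = complex_of_real theta * V$(n-1)" by (rule sum_delta_c[OF n1])
    finally show ?thesis using 3 e unfolding Jc_def J_def
      by (auto simp: Jx_entries[OF n])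
  qed
qed



lemma M_shift:
  fixes M :: "real mat" and u :: "real Matrix.vec"
  assumes M: "M \<in> carrier_mat n n" and u: "u \<in> carrier_vec n" and N: "N < n" and k: "k < n"
  shows "(M *\<^sub>v (u - c \<cdot>\<^sub>v unit_vec n N)) $ k = (M *\<^sub>v u) $ k - c * M $$ (k, N)"
    "(M *\<^sub>v (c \<cdot>\<^sub>v unit_vec n N - u)) $ k = c * M $$ (k, N) - (M *\<^sub>v u) $ k"
proof -
  have c1: "u - c \<cdot>\<^sub>v unit_vec n N \<in> carrier_vec n" using u by simp
  have c2: "c \<cdot>\<^sub>v unit_vec n N - u \<in> carrier_vec n" using u by simp
  have d: "(\<Sum>j<n. M$$(k,j) * (if j = N then c else 0)) = c * M$$(k,N)"
  proof -
    have "(\<Sum>j<n. M$$(k,j) * (if j = N then c else 0)) = (\<Sum>j<n. if j = N then M$$(k,j) * c else 0)"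
      by (rule sum.cong) auto
    thus ?thesis using N by simp
  qed
  have "(M *\<^sub>v (u - c \<cdot>\<^sub>v unit_vec n N)) $ k = (\<Sum>j<n. M$$(k,j) * u $ j - M$$(k,j) * (if j = N then c else 0))"
    unfolding mv_sum[OF M c1 k] using u N by (intro sum.cong) (auto simp: algebra_simps)
  also have "\<dots> = (M *\<^sub>v u) $ k - c * M $$ (k, N)"
    unfolding sum_subtractf d mv_sum[OF M u k] ..
  finally show "(M *\<^sub>v (u - c \<cdot>\<^sub>v unit_vec n N)) $ k = (M *\<^sub>v u) $ k - c * M $$ (k, N)" .
  have "(M *\<^sub>v (c \<cdot>\<^sub>v unit_vec n N - u)) $ k = (\<Sum>j<n. M$$(k,j) * (if j = N then c else 0) - M$$(k,j) * u $ j)"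
    unfolding mv_sum[OF M c2 k] using u N by (intro sum.cong) (auto simp: algebra_simps)
  also have "\<dots> = c * M $$ (k, N) - (M *\<^sub>v u) $ k"
    unfolding sum_subtractf d mv_sum[OF M u k] ..
  finally show "(M *\<^sub>v (c \<cdot>\<^sub>v unit_vec n N - u)) $ k = c * M $$ (k, N) - (M *\<^sub>v u) $ k" .
qed

lemma gn_pos:
  fixes A :: "real mat"
  assumes A: "A \<in> carrier_mat n n" and metz: "metzler A" and hur: "hurwitz A" and n: "n \<ge> 1"
  shows "minv A $$ (n-1, n-1) < 0"
proof -
  define M where "M = minv A"
  note Mp = minv_props[OF A metz hur, folded M_def]
  define N where "N = n - 1"
  have N: "N < n" using n by (simp add: N_def)
  define e where "e = (unit_vec n N :: real Matrix.vec)"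
  have e: "e \<in> carrier_vec n" by (simp add: e_def)
  define w where "w = M *\<^sub>v e"
  have w: "w \<in> carrier_vec n" using Mp(1) e by (simp add: w_def)
  have Aw: "A *\<^sub>v w = e" unfolding w_def
    using assoc_mult_mat_vec[OF A Mp(1) e, symmetric] Mp(2) e by simp
  have "\<forall>i<n. (A *\<^sub>v w) $ i \<ge> 0" unfolding Aw using N by (simp add: e_def)
  from KL2[OF A metz hur w this] have wle: "\<forall>i<n. w $ i \<le> 0" .
  have wN: "w $ N = M $$ (N,N)"
  proof -
    have "w $ N = (\<Sum>j<n. M$$(N,j) * e $ j)" unfolding w_def by (rule mv_sum[OF Mp(1) e N])
    also have "\<dots> = (\<Sum>j<n. if j = N then M$$(N,j) else 0)"
      by (rule sum.cong) (auto simp: e_def N)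
    finally show ?thesis using N by simp
  qed
  have "w $ N \<noteq> 0"
  proof
    assume w0: "w $ N = 0"
    have "(A *\<^sub>v w) $ N = (\<Sum>j<n. A$$(N,j) * w $ j)" by (rule mv_sum[OF A w N])
    also have "\<dots> \<le> 0"
    proof (rule sum_nonpos)
      fix j assume j: "j \<in> {..<n}"
      show "A$$(N,j) * w $ j \<le> 0"
      proof (cases "j = N")
        case True thus ?thesis using w0 by simp
      next
        case False
        hence "A$$(N,j) \<ge> 0" using metz A N j unfolding metzler_def by auto
        thus ?thesis using wle j by (simp add: mult_nonneg_nonpos)
      qed
    qed
    finally show False unfolding Aw using N by (simp add: e_def)
  qed
  with wle N wN show ?thesis unfolding M_def N_def by force
qed

theorem mainTheorem9:
  fixes n :: nat and A :: "real mat" and b0 :: "real vec" and mu theta :: real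
  assumes n: "n \<ge> 1"
    and A: "A \<in> carrier_mat n n" and metz: "metzler A" and hur: "hurwitz A"
    and b0: "b0 \<in> carrier_vec n" and b0_nonneg: "\<forall>i < n. b0 $ i \<ge> 0"
    and mu: "mu > 0" and theta: "theta > 0"
    and r_lt: "mu / theta < - (minv A *\<^sub>v b0) $ (n-1)"
  shows "\<forall>eta kp. eta > 0 \<longrightarrow> kp > 0 \<longrightarrow>
    (let r = mu / theta;
         g0 = - (minv A *\<^sub>v b0) $ (n-1);
         gn = - (minv A $$ (n-1, n-1));
         us = (g0 - r) / (gn * r);
         xs = - (minv A *\<^sub>v (b0 - (r * us) \<cdot>\<^sub>v unit_vec n (n-1)));
         eq = vec (n+2) (\<lambda>i. if i < n then xs $ i
                               else if i = n then mu / (eta * us) else us / kp)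
     in {w \<in> carrier_vec (n+2). field n A b0 mu theta eta kp w = 0\<^sub>v (n+2)} = {eq}
        \<and> hurwitz (jacobian (field n A b0 mu theta eta kp) eq))"
proof (intro allI impI)
  fix eta kp :: real
  assume eta: "eta > 0" and kp: "kp > 0"
  define r where "r = mu / theta"
  define g0 where "g0 = - (minv A *\<^sub>v b0) $ (n-1)"
  define gn where "gn = - (minv A $$ (n-1, n-1))"
  define us where "us = (g0 - r) / (gn * r)"
  define xs where "xs = - (minv A *\<^sub>v (b0 - (r * us) \<cdot>\<^sub>v unit_vec n (n-1)))"
  define eq where "eq = vec (n+2) (\<lambda>i. if i < n then xs $ i else if i = n then mu / (eta * us) else us / kp)"
  define F where "F = field n A b0 mu theta eta kp"
  define M where "M = minv A"
  note Mp = minv_props[OF A metz hur, folded M_def]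
  define N where "N = n - 1"
  have N: "N < n" using n by (simp add: N_def)
  have r: "r > 0" using mu theta by (simp add: r_def)
  have gn: "gn > 0" using gn_pos[OF A metz hur n] by (simp add: gn_def)
  have g0r: "g0 > r" using r_lt by (simp add: g0_def r_def)
  have us: "us > 0" using gn r g0r by (simp add: us_def)
  have usgn: "us * gn * r = g0 - r" using gn r by (simp add: us_def)
  have xs: "xs \<in> carrier_vec n" using Mp(1) b0 by (simp add: xs_def M_def[symmetric])
  have xsk: "xs $ k = r * us * M $$ (k, N) - (M *\<^sub>v b0) $ k" if "k < n" for k
    using M_shift(1)[OF Mp(1) b0 N that, of "r * us"] that Mp(1) b0
    by (simp add: xs_def M_def N_def)
  have xsN: "xs $ N = r"
    using xsk[OF N] usgn unfolding g0_def gn_def M_def N_def by (simp add: algebra_simps)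
  have Axs: "(\<Sum>k<n. A$$(i,k) * xs $ k) = r * us * (if i = N then 1 else 0) - b0 $ i" if i: "i < n" for i
  proof -
    define v' where "v' = b0 - (r * us) \<cdot>\<^sub>v unit_vec n N"
    have v': "v' \<in> carrier_vec n" using b0 by (simp add: v'_def)
    have Mv: "M *\<^sub>v v' \<in> carrier_vec n" using Mp(1) v' by simp
    have "(\<Sum>k<n. A$$(i,k) * xs $ k) = - (\<Sum>k<n. A$$(i,k) * (M *\<^sub>v v') $ k)"
      unfolding sum_negf[symmetric] using Mp(1) v'
      by (intro sum.cong) (auto simp: xs_def v'_def M_def N_def)
    also have "(\<Sum>k<n. A$$(i,k) * (M *\<^sub>v v') $ k) = (A *\<^sub>v (M *\<^sub>v v')) $ i"
      using mv_sum[OF A Mv i] by simp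
    also have "A *\<^sub>v (M *\<^sub>v v') = v'"
      using assoc_mult_mat_vec[OF A Mp(1) v', symmetric] Mp(2) v' by simp
    finally show ?thesis using i N b0 by (simp add: v'_def)
  qed
  have eq: "eq \<in> carrier_vec (n+2)" by (simp add: eq_def)
  have eqk: "eq $ k = xs $ k" if "k < n" for k using that by (simp add: eq_def)
  have eqN: "eq $ N = r" using eqk[OF N] xsN by simp
  have eqn: "eq $ n = mu / (eta * us)" by (simp add: eq_def)
  have eqn1: "eq $ (n+1) = us / kp" by (simp add: eq_def)
  have zero_eq: "F eq = 0\<^sub>v (n+2)"
  proof (rule eq_vecI)
    show "dim_vec (F eq) = dim_vec (0\<^sub>v (n+2) :: real Matrix.vec)" by (simp add: F_def field_def Let_def)
    fix i assume "i < dim_vec (0\<^sub>v (n+2) :: real Matrix.vec)"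
    hence i: "i < n+2" by simp
    have fi: "F eq $ i = (if i < n then (\<Sum>k<n. A$$(i,k) * eq$k) - kp * eq$N * eq$(n+1) * (if i = N then 1 else 0) + b0$i
       else if i = n then mu - kp*eta*eq$n*eq$(n+1) else theta*eq$N - kp*eta*eq$n*eq$(n+1))"
      unfolding F_def N_def by (rule field_idx[OF n A i])
    have s: "(\<Sum>k<n. A$$(i,k) * eq$k) = (\<Sum>k<n. A$$(i,k) * xs$k)" by (intro sum.cong) (auto simp: eqk)
    show "F eq $ i = 0\<^sub>v (n+2) $ i"
    proof -
      consider "i < n" | "i = n" | "i = n+1" using i by linarith
      then have "F eq $ i = 0"
      proof cases
        case 1 thus ?thesis using fi s Axs[OF 1] eqN eqn1 kp by simp
      next
        case 2 thus ?thesis using fi eqn eqn1 kp eta us by simp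
      next
        case 3 thus ?thesis using fi eqN eqn eqn1 kp eta us theta by (simp add: r_def)
      qed
      thus ?thesis using i by simp
    qed
  qed
  have zero_uniq: "w = eq" if w: "w \<in> carrier_vec (n+2)" and Fw: "F w = 0\<^sub>v (n+2)" for w
  proof -
    have fi: "F w $ i = 0" if "i < n+2" for i using Fw that by simp
    have fw: "F w $ i = (if i < n then (\<Sum>k<n. A$$(i,k) * w$k) - kp * w$N * w$(n+1) * (if i = N then 1 else 0) + b0$i
       else if i = n then mu - kp*eta*w$n*w$(n+1) else theta*w$N - kp*eta*w$n*w$(n+1))" if "i < n+2" for i
      unfolding F_def N_def by (rule field_idx[OF n A that])
    have E1: "mu = kp*eta*w$n*w$(n+1)" using fi[of n] fw[of n] by simp
    have E2: "theta*w$N = kp*eta*w$n*w$(n+1)" using fi[of "n+1"] fw[of "n+1"] by simp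
    have wN: "w $ N = r" using E1 E2 theta by (simp add: r_def field_simps)
    define x where "x = vec n (\<lambda>k. w $ k)"
    have x: "x \<in> carrier_vec n" by (simp add: x_def)
    define c where "c = kp * r * w$(n+1)"
    have Ax: "A *\<^sub>v x = c \<cdot>\<^sub>v unit_vec n N - b0"
    proof (rule eq_vecI)
      show "dim_vec (A *\<^sub>v x) = dim_vec (c \<cdot>\<^sub>v unit_vec n N - b0)" using A b0 by simp
      fix i assume "i < dim_vec (c \<cdot>\<^sub>v unit_vec n N - b0)"
      hence i: "i < n" using b0 by simp
      have "(A *\<^sub>v x) $ i = (\<Sum>k<n. A$$(i,k) * w$k)" using mv_sum[OF A x i] by (simp add: x_def)
      moreover have "(\<Sum>k<n. A$$(i,k) * w$k) - kp * w$N * w$(n+1) * (if i = N then 1 else 0) + b0$i = 0"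
        using fi[of i] fw[of i] i by simp
      ultimately show "(A *\<^sub>v x) $ i = (c \<cdot>\<^sub>v unit_vec n N - b0) $ i"
        using i b0 N wN by (simp add: c_def)
    qed
    have xM: "x = M *\<^sub>v (c \<cdot>\<^sub>v unit_vec n N - b0)"
      unfolding Ax[symmetric] using assoc_mult_mat_vec[OF Mp(1) A x, symmetric] Mp(3) x by simp
    have xk: "x $ k = c * M $$ (k, N) - (M *\<^sub>v b0) $ k" if "k < n" for k
      unfolding xM by (rule M_shift(2)[OF Mp(1) b0 N that])
    have "r = c * M $$ (N, N) - (M *\<^sub>v b0) $ N" using xk[OF N] wN N by (simp add: x_def)
    hence "c * gn = g0 - r" unfolding gn_def g0_def M_def N_def by simp
    hence "kp * w$(n+1) * (gn * r) = g0 - r" unfolding c_def by (simp add: algebra_simps)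
    hence kw: "kp * w$(n+1) = us" using gn r unfolding us_def by (simp add: field_simps)
    hence wn1: "w$(n+1) = us / kp" using kp by (simp add: field_simps)
    have wn: "w$n = mu / (eta * us)" using E1 kw eta us
      by (simp add: field_simps)
    have c: "c = r * us" using kw by (simp add: c_def)
    show ?thesis
    proof (rule eq_vecI)
      show "dim_vec w = dim_vec eq" using w eq by simp
      fix i assume "i < dim_vec eq"
      hence i: "i < n+2" by (simp add: eq_def)
      consider "i < n" | "i = n" | "i = n+1" using i by linarith
      thus "w $ i = eq $ i"
      proof cases
        case 1
        have "w $ i = x $ i" using 1 by (simp add: x_def)
        also have "\<dots> = xs $ i" using xk[OF 1] xsk[OF 1] c by simp
        finally show ?thesis using eqk[OF 1] by simp
      next
        case 2 thus ?thesis using wn eqn by simp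
      next
        case 3 thus ?thesis using wn1 eqn1 by simp
      qed
    qed
  qed
  have zeroset: "{w \<in> carrier_vec (n+2). F w = 0\<^sub>v (n+2)} = {eq}"
    using zero_eq zero_uniq eq by blast
  have Jeq: "jacobian F eq = Jx n A eta kp theta eq"
    unfolding F_def by (rule jacobian_Jx[OF n A b0 eq])
  have hurJ: "hurwitz (jacobian F eq)"
    unfolding hurwitz_def Jeq
  proof (intro conjI allI impI)
    show "dim_row (Jx n A eta kp theta eq) = dim_col (Jx n A eta kp theta eq)" by (simp add: Jx_def)
    fix l assume "eigenvalue (map_mat complex_of_real (Jx n A eta kp theta eq)) l"
    then obtain V where V: "V \<in> carrier_vec (n+2)" "V \<noteq> 0\<^sub>v (n+2)"
      "map_mat complex_of_real (Jx n A eta kp theta eq) *\<^sub>v V = l \<cdot>\<^sub>v V"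
      unfolding eigenvalue_def eigenvector_def by (auto simp: Jx_def)
    show "Re l < 0"
    proof (rule ccontr)
      assume "\<not> Re l < 0"
      hence rl: "Re l \<ge> 0" by simp
      have row: "l * V $ i = (map_mat complex_of_real (Jx n A eta kp theta eq) *\<^sub>v V) $ i" if "i < n+2" for i
        using V(3) V(1) that by simp
      note rJ = rowJ[OF n A V(1), where eta=eta and kp=kp and theta=theta and w=eq]
      have kpus: "kp * eq $ (n+1) = us" using kp eqn1 by simp
      have kpN: "kp * eq $ (n-1) = kp * r" using eqN by (simp add: N_def)
      have c: "kp * eta * eq $ (n+1) = eta * us" using kp eqn1 by simp
      have d: "kp * eta * eq $ n = kp * mu / us" using eta us eqn by simp
      define Jc where "Jc = map_mat complex_of_real (Jx n A eta kp theta eq)"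
      have rows: "\<forall>i<n. l * V $ i = (\<Sum>k<n. complex_of_real (A$$(i,k)) * V $ k)
         - (if i = n-1 then complex_of_real us * V $ (n-1) + complex_of_real (kp * r) * V $ (n+1) else 0)"
      proof (intro allI impI)
        fix i assume i: "i < n"
        have i2: "i < n+2" using i by simp
        have "(Jc *\<^sub>v V) $ i = (\<Sum>k<n. complex_of_real (A$$(i,k)) * V $ k)
         - (if i = n-1 then complex_of_real us * V $ (n-1) + complex_of_real (kp * r) * V $ (n+1) else 0)"
          using rJ[OF i2, unfolded kpus kpN] i unfolding Jc_def by simp
        with row[OF i2] show "l * V $ i = (\<Sum>k<n. complex_of_real (A$$(i,k)) * V $ k)
         - (if i = n-1 then complex_of_real us * V $ (n-1) + complex_of_real (kp * r) * V $ (n+1) else 0)"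
          unfolding Jc_def by simp
      qed
      have n2: "n < n+2" "n+1 < n+2" by simp_all
      have "(Jc *\<^sub>v V) $ n = - (complex_of_real (eta * us) * V $ n + complex_of_real (kp * mu / us) * V $ (n+1))"
        using rJ[OF n2(1), unfolded c d] unfolding Jc_def by simp
      with row[OF n2(1)] have rowp: "l * V $ n = - (complex_of_real (eta * us) * V $ n + complex_of_real (kp * mu / us) * V $ (n+1))"
        unfolding Jc_def by simp
      have "(Jc *\<^sub>v V) $ (n+1) = complex_of_real theta * V $ (n-1) - (complex_of_real (eta * us) * V $ n + complex_of_real (kp * mu / us) * V $ (n+1))"
        using rJ[OF n2(2), unfolded c d] unfolding Jc_def by simp
      with row[OF n2(2)] have rowq: "l * V $ (n+1) = complex_of_real theta * V $ (n-1) - (complex_of_real (eta * us) * V $ n + complex_of_real (kp * mu / us) * V $ (n+1))"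
        unfolding Jc_def by simp
      have cc: "eta * us > 0" "kp * mu / us > 0" "kp * r > 0" using eta us kp mu r by auto
      from core[OF A metz hur n us cc(1) cc(2) cc(3) theta rl rows rowp rowq]
      have z: "\<forall>k<n. V $ k = 0" "V $ n = 0" "V $ (n+1) = 0" by auto
      have "V = 0\<^sub>v (n+2)"
      proof (rule eq_vecI)
        fix i assume "i < dim_vec (0\<^sub>v (n+2) :: complex Matrix.vec)"
        hence i: "i < n+2" by simp
        consider "i < n" | "i = n" | "i = n+1" using i by linarith
        thus "V $ i = 0\<^sub>v (n+2) $ i" using z i by cases auto
      qed (use V(1) in simp)
      with V(2) show False by simp
    qed
  qed
  show "let r = mu / theta;
         g0 = - (minv A *\<^sub>v b0) $ (n-1);
         gn = - (minv A $$ (n-1, n-1));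
         us = (g0 - r) / (gn * r);
         xs = - (minv A *\<^sub>v (b0 - (r * us) \<cdot>\<^sub>v unit_vec n (n-1)));
         eq = vec (n+2) (\<lambda>i. if i < n then xs $ i
                               else if i = n then mu / (eta * us) else us / kp)
     in {w \<in> carrier_vec (n+2). field n A b0 mu theta eta kp w = 0\<^sub>v (n+2)} = {eq}
        \<and> hurwitz (jacobian (field n A b0 mu theta eta kp) eq)"
    using zeroset hurJ unfolding Let_def F_def eq_def xs_def us_def gn_def g0_def r_def by simp
qed

end
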